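(* For every prime $p$ the natural maps induce an isomorphism of rings $$\mathbb Z[1/p][q]^{\mathbb N}\;\cong\;\prod_{j=0}^\infty\mathbb Z[1/p][q]^{p^j\mathbb N_p}.$$
   Context: $\mathbb N=\{1,2,\dots\}$, $\mathbb N_p=\{n\in\mathbb N:(n,p)=1\}$, $p^j\mathbb N_p=\{p^jn:n\in\mathbb N_p\}$. For a commutative integral domain $R$ of characteristic zero and $S\subset\mathbb N$, $R[q]^S=\varprojlim_{f\in\Phi^*_S}R[q]/(f)$, where $\Phi^*_S$ is the multiplicative set generated by the cyclotomic polynomials $\Phi_n(q)$, $n\in S$, directed by divisibility; for $S'\subset S$ there is a natural map $R[q]^S\to R[q]^{S'}$. *)

theory Defs
  imports Complex_Main "HOL-Computational_Algebra.Polynomial"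
begin

text \<open>All polynomials live in complex[q]; R = Z[1/p] is the subring of rationals
  a / p^k, embedded in the complex numbers, and R[q] the polynomials with
  coefficients in R.\<close>

definition Zinvp :: "nat \<Rightarrow> complex set" where
  "Zinvp p = {z. \<exists>(a::int) (k::nat). z = of_int a / of_nat p ^ k}"

definition Rpoly :: "nat \<Rightarrow> complex poly set" where
  "Rpoly p = {f. \<forall>i. coeff f i \<in> Zinvp p}"

definition dvdR :: "nat \<Rightarrow> complex poly \<Rightarrow> complex poly \<Rightarrow> bool" where
  "dvdR p f g \<longleftrightarrow> (\<exists>h\<in>Rpoly p. g = f * h)"

definition cyclo :: "nat \<Rightarrow> complex poly" where
  "cyclo n = (\<Prod>k\<in>{k. k < n \<and> coprime k n}. [:- cis (2 * pi * real k / real n), 1:])"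

inductive_set cycloMult :: "nat set \<Rightarrow> complex poly set" for S where
  one: "1 \<in> cycloMult S"
| step: "n \<in> S \<Longrightarrow> f \<in> cycloMult S \<Longrightarrow> cyclo n * f \<in> cycloMult S"

text \<open>Elements of R[q]^S = lim_{f in cycloMult S} R[q]/(f), represented by
  compatible families of representatives g f in R[q].\<close>
definition compat :: "nat \<Rightarrow> nat set \<Rightarrow> (complex poly \<Rightarrow> complex poly) \<Rightarrow> bool" where
  "compat p S g \<longleftrightarrow>
     (\<forall>f\<in>cycloMult S. g f \<in> Rpoly p) \<and>
     (\<forall>f\<in>cycloMult S. \<forall>f'\<in>cycloMult S. dvdR p f f' \<longrightarrow> dvdR p f (g f' - g f))"

text \<open>Equality of the elements of R[q]^S represented by two families.\<close>
definition eqlim :: "nat \<Rightarrow> nat set \<Rightarrow> (complex poly \<Rightarrow> complex poly) \<Rightarrow> (complex poly \<Rightarrow> complex poly) \<Rightarrow> bool" where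
  "eqlim p S g h \<longleftrightarrow> (\<forall>f\<in>cycloMult S. dvdR p f (g f - h f))"

definition pjNp :: "nat \<Rightarrow> nat \<Rightarrow> nat set" where
  "pjNp p j = {p ^ j * n | n. n \<ge> 1 \<and> coprime n p}"

end

theory Submission
  imports Defs "HOL-Number_Theory.Totient"
begin


lemma Zinvp_int[simp]: "of_int a \<in> Zinvp p"
  unfolding Zinvp_def by (auto intro!: exI[of _ a] exI[of _ "0::nat"])

lemma Zinvp_0[simp]: "0 \<in> Zinvp p" using Zinvp_int[of 0 p] by simp
lemma Zinvp_1[simp]: "1 \<in> Zinvp p" using Zinvp_int[of 1 p] by simp
lemma Zinvp_nat[simp]: "of_nat n \<in> Zinvp p" using Zinvp_int[of "int n" p] by simp

lemma Zinvp_inv: "p > 0 \<Longrightarrow> 1 / of_nat p \<in> Zinvp p"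
  unfolding Zinvp_def by (auto intro!: exI[of _ 1] exI[of _ "1::nat"])

lemma Zinvp_add: assumes "p > 0" "x \<in> Zinvp p" "y \<in> Zinvp p" shows "x + y \<in> Zinvp p"
proof -
  obtain a k b l where x: "x = of_int a / of_nat p ^ k" and y: "y = of_int b / of_nat p ^ l"
    using assms unfolding Zinvp_def by blast
  have "x + y = of_int (a * int p ^ l + b * int p ^ k) / of_nat p ^ (k + l)"
    using assms(1) by (simp add: x y field_simps power_add)
  thus ?thesis unfolding Zinvp_def by blast
qed

lemma Zinvp_mult: assumes "x \<in> Zinvp p" "y \<in> Zinvp p" shows "x * y \<in> Zinvp p"
proof -
  obtain a k b l where x: "x = of_int a / of_nat p ^ k" and y: "y = of_int b / of_nat p ^ l"
    using assms unfolding Zinvp_def by blast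
  have "x * y = of_int (a * b) / of_nat p ^ (k + l)"
    by (simp add: x y power_add)
  thus ?thesis unfolding Zinvp_def by blast
qed

lemma Zinvp_uminus: assumes "x \<in> Zinvp p" shows "- x \<in> Zinvp p"
proof -
  obtain a k where x: "x = of_int a / of_nat p ^ k"
    using assms unfolding Zinvp_def by blast
  have "- x = of_int (- a) / of_nat p ^ k" by (simp add: x)
  thus ?thesis unfolding Zinvp_def by blast
qed

lemma Zinvp_diff: "p > 0 \<Longrightarrow> x \<in> Zinvp p \<Longrightarrow> y \<in> Zinvp p \<Longrightarrow> x - y \<in> Zinvp p"
  using Zinvp_add[of p x "-y"] Zinvp_uminus[of y p] by simp

lemma Zinvp_sum: "p > 0 \<Longrightarrow> (\<And>i. i \<in> A \<Longrightarrow> f i \<in> Zinvp p) \<Longrightarrow> sum f A \<in> Zinvp p"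
  by (induction A rule: infinite_finite_induct) (auto intro: Zinvp_add)

lemma Rpoly_0[simp]: "0 \<in> Rpoly p" by (simp add: Rpoly_def)
lemma Rpoly_1[simp]: "1 \<in> Rpoly p" by (simp add: Rpoly_def coeff_1)
lemma Rpoly_const: "c \<in> Zinvp p \<Longrightarrow> [:c:] \<in> Rpoly p"
  by (simp add: Rpoly_def coeff_pCons split: nat.splits)
lemma Rpoly_monom: "c \<in> Zinvp p \<Longrightarrow> monom c n \<in> Rpoly p"
  by (simp add: Rpoly_def coeff_monom)
lemma Rpoly_of_nat[simp]: "of_nat n \<in> Rpoly p"
  by (simp add: Rpoly_def of_nat_poly coeff_pCons split: nat.splits)
lemma Rpoly_add: "p > 0 \<Longrightarrow> f \<in> Rpoly p \<Longrightarrow> g \<in> Rpoly p \<Longrightarrow> f + g \<in> Rpoly p"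
  by (simp add: Rpoly_def Zinvp_add)
lemma Rpoly_diff: "p > 0 \<Longrightarrow> f \<in> Rpoly p \<Longrightarrow> g \<in> Rpoly p \<Longrightarrow> f - g \<in> Rpoly p"
  by (simp add: Rpoly_def Zinvp_diff)
lemma Rpoly_mult: "p > 0 \<Longrightarrow> f \<in> Rpoly p \<Longrightarrow> g \<in> Rpoly p \<Longrightarrow> f * g \<in> Rpoly p"
  by (simp add: Rpoly_def coeff_mult Zinvp_sum Zinvp_mult)
lemma Rpoly_smult: "p > 0 \<Longrightarrow> c \<in> Zinvp p \<Longrightarrow> f \<in> Rpoly p \<Longrightarrow> smult c f \<in> Rpoly p"
  by (simp add: Rpoly_def Zinvp_mult)
lemma Rpoly_sum: "p > 0 \<Longrightarrow> (\<And>i. i \<in> A \<Longrightarrow> f i \<in> Rpoly p) \<Longrightarrow> sum f A \<in> Rpoly p"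
  by (induction A rule: infinite_finite_induct) (auto intro: Rpoly_add)
lemma Rpoly_prod: "p > 0 \<Longrightarrow> (\<And>i. i \<in> A \<Longrightarrow> f i \<in> Rpoly p) \<Longrightarrow> prod f A \<in> Rpoly p"
  by (induction A rule: infinite_finite_induct) (auto intro: Rpoly_mult)
lemma Rpoly_power: "p > 0 \<Longrightarrow> f \<in> Rpoly p \<Longrightarrow> f ^ n \<in> Rpoly p"
  by (induction n) (auto intro: Rpoly_mult)

lemma Rpoly_div_monic:
  assumes p: "p > 0" and f: "f \<in> Rpoly p" and mon: "lead_coeff f = 1"
  shows "f * h \<in> Rpoly p \<Longrightarrow> h \<in> Rpoly p"
proof (induction "degree h" arbitrary: h rule: less_induct)
  case less
  show ?case
  proof (cases "h = 0")
    case True thus ?thesis by simp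
  next
    case False
    define c where "c = lead_coeff h"
    define h' where "h' = h - monom c (degree h)"
    have f0: "f \<noteq> 0" using mon by auto
    have "lead_coeff (f * h) = c" using mon by (simp add: c_def lead_coeff_mult)
    moreover have "coeff (f * h) (degree (f * h)) \<in> Zinvp p" using less.prems unfolding Rpoly_def by blast
    ultimately have cZ: "c \<in> Zinvp p" by simp
    have mc: "monom c (degree h) \<in> Rpoly p" using cZ by (rule Rpoly_monom)
    have "f * h' = f * h - f * monom c (degree h)" by (simp add: h'_def algebra_simps)
    hence fh': "f * h' \<in> Rpoly p"
      using less.prems mc f p by (simp add: Rpoly_diff Rpoly_mult)
    have "h' \<in> Rpoly p"
    proof (cases "h' = 0")
      case True thus ?thesis by simp
    next
      case False
      have "degree h' < degree h"
      proof (cases "degree h = 0")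
        case True
        then have "h = [:c:]" unfolding c_def by (metis degree_0_id)
        hence "h' = 0" unfolding h'_def using True by (simp add: monom_0)
        with False show ?thesis by simp
      next
        case dpos: False
        have "degree h' \<le> degree h" unfolding h'_def
          by (metis degree_diff_le degree_monom_le le_refl)
        moreover have "coeff h' (degree h) = 0" by (simp add: h'_def c_def coeff_monom)
        ultimately show ?thesis using False
          by (metis le_neq_implies_less leading_coeff_0_iff)
      qed
      thus ?thesis using less.hyps fh' by blast
    qed
    hence "h' + monom c (degree h) \<in> Rpoly p" using mc p by (rule_tac Rpoly_add) auto
    thus ?thesis by (simp add: h'_def)
  qed
qed


lemma cis_eq_1_int: assumes "cis x = 1" shows "\<exists>m::int. x = of_int m * 2 * pi"
proof -
  have "cos x = 1" using assms by (metis Re_complex_of_real complex_Re_numeral cis.sel(1) one_complex.sel(1))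
  thus ?thesis using cos_one_2pi_int by auto
qed

lemma cis_2pi_inj:
  assumes "0 \<le> a" "a < 1" "0 \<le> b" "b < 1" "cis (2 * pi * a) = cis (2 * pi * b)"
  shows "a = b"
proof -
  have "cis (2 * pi * a - 2 * pi * b) = 1" using assms(5) by (simp flip: cis_divide)
  then obtain m :: int where m: "2 * pi * a - 2 * pi * b = of_int m * 2 * pi" using cis_eq_1_int by blast
  hence "2 * pi * (a - b - of_int m) = 0" by (simp add: algebra_simps)
  hence "a - b = of_int m" by simp
  moreover have "\<bar>a - b\<bar> < 1" using assms by auto
  ultimately have "m = 0" by auto
  thus ?thesis using \<open>a - b = of_int m\<close> by simp
qed

definition rt :: "nat \<Rightarrow> nat \<Rightarrow> complex" where
  "rt n k = cis (2 * pi * real k / real n)"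

definition Rt :: "nat \<Rightarrow> complex set" where
  "Rt n = rt n ` {k. k < n \<and> coprime k n}"

lemma rt_inj: assumes "k < n" "k' < n'" "rt n k = rt n' k'" shows "real k / real n = real k' / real n'"
  using assms cis_2pi_inj[of "real k / real n" "real k' / real n'"]
  by (auto simp: rt_def field_simps)

lemma Rt_finite[simp]: "finite (Rt n)" by (simp add: Rt_def)

lemma inj_rt: "inj_on (rt n) {k. k < n \<and> coprime k n}"
proof (rule inj_onI)
  fix k k' assume "k \<in> {k. k < n \<and> coprime k n}" "k' \<in> {k. k < n \<and> coprime k n}" "rt n k = rt n k'"
  hence "real k / real n = real k' / real n" using rt_inj[of k n k' n] \<open>k \<in> _\<close> \<open>k' \<in> _\<close> by auto
  moreover have "n > 0" using \<open>k \<in> _\<close> by auto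
  ultimately show "k = k'" by (simp add: field_simps)
qed

lemma cyclo_Rt: "cyclo n = (\<Prod>z\<in>Rt n. [:-z, 1:])"
  unfolding cyclo_def Rt_def by (subst prod.reindex[OF inj_rt]) (simp add: rt_def)

lemma card_Rt: "card (Rt n) = totient n"
proof -
  have "card (Rt n) = card {k. k < n \<and> coprime k n}" unfolding Rt_def by (rule card_image[OF inj_rt])
  also have "\<dots> = totient n"
  proof (cases "n \<le> 1")
    case True
    then consider "n = 0" | "n = 1" by linarith
    thus ?thesis by cases auto
  next
    case False
    have "{k. k < n \<and> coprime k n} = totatives n"
      unfolding totatives_def using False
      by (auto simp: le_less intro: Nat.gr0I)
    thus ?thesis by (simp add: totient_def)
  qed
  finally show ?thesis .
qed

lemma Rt_disjoint:
  assumes "z \<in> Rt d" "z \<in> Rt d'" shows "d = d'"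
proof -
  obtain k k' where k: "k < d" "coprime k d" "z = rt d k" and k': "k' < d'" "coprime k' d'" "z = rt d' k'"
    using assms unfolding Rt_def by auto
  have "real k / real d = real k' / real d'" using rt_inj k k' by metis
  hence "real (k * d') = real (k' * d)" using k k' by (simp add: field_simps)
  hence e: "k * d' = k' * d" by linarith
  have "d dvd d'" using e k(2) by (metis coprime_commute coprime_dvd_mult_right_iff dvd_triv_right)
  moreover have "d' dvd d" using e k'(2) by (metis coprime_commute coprime_dvd_mult_right_iff dvd_triv_right)
  ultimately show ?thesis by (simp add: dvd_antisym)
qed

lemma rt_pow: "rt n k ^ m = cis (2 * pi * (real k * real m / real n))"
  by (simp add: rt_def DeMoivre algebra_simps)

lemma Rt_root: assumes "z \<in> Rt d" "d dvd n" shows "z ^ n = 1"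
proof -
  obtain k where k: "k < d" "z = rt d k" using assms unfolding Rt_def by auto
  obtain e where n: "n = d * e" using assms by blast
  have "d > 0" using k by auto
  hence "real k * real n / real d = real (k * e)" by (simp add: n field_simps)
  thus ?thesis using k rt_pow[of d k n] by (simp add: cis_multiple_2pi)
qed

lemma lin_prod_dvd:
  fixes F :: "complex poly"
  assumes "finite A" "\<And>z. z \<in> A \<Longrightarrow> poly F z = 0"
  shows "(\<Prod>z\<in>A. [:-z, 1:]) dvd F"
  using assms
proof (induction A arbitrary: F rule: finite_induct)
  case empty thus ?case by simp
next
  case (insert a A)
  obtain G where G: "F = [:-a, 1:] * G" using insert.prems poly_eq_0_iff_dvd by blast
  have "\<And>z. z \<in> A \<Longrightarrow> poly G z = 0"
  proof -
    fix z assume "z \<in> A"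
    hence "z \<noteq> a" "poly F z = 0" using insert by auto
    thus "poly G z = 0" using G by simp
  qed
  hence "(\<Prod>z\<in>A. [:-z, 1:]) dvd G" using insert.IH by blast
  moreover have "(\<Prod>z\<in>insert a A. [:-z, 1:]) = [:-a,1:] * (\<Prod>z\<in>A. [:-z, 1:])"
    using insert.hyps by (rule prod.insert)
  ultimately show ?case unfolding G by (metis mult_dvd_mono dvd_refl)
qed

lemma monic_lin_prod: "lead_coeff (\<Prod>z\<in>A. [:-z, 1:] :: complex poly) = 1"
  by (simp add: lead_coeff_prod)

lemma degree_lin_prod: "finite A \<Longrightarrow> degree (\<Prod>z\<in>A. [:-z, 1:] :: complex poly) = card A"
  by (subst degree_prod_sum_eq) auto

lemma monic_cyclo: "lead_coeff (cyclo n) = 1"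
  by (simp add: cyclo_Rt monic_lin_prod)

lemma degree_cyclo: "degree (cyclo n) = totient n"
  by (simp add: cyclo_Rt degree_lin_prod card_Rt)

lemma monic_dvd_eq:
  fixes f g :: "complex poly"
  assumes "f dvd g" "lead_coeff f = 1" "lead_coeff g = 1" "degree f = degree g"
  shows "f = g"
proof -
  obtain h where h: "g = f * h" using assms by blast
  have "h \<noteq> 0" using h assms(3) by auto
  moreover have "f \<noteq> 0" using assms(2) by auto
  ultimately have "degree h = 0" using h assms(4) by (simp add: degree_mult_eq)
  moreover have "lead_coeff h = 1" using h assms(2,3) by (simp add: lead_coeff_mult)
  ultimately have "h = 1" by (metis degree_0_id one_pCons)
  thus ?thesis using h by simp
qed

lemma poly_xn1: "poly (monom 1 n - 1 :: complex poly) z = z ^ n - 1"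
  by (simp add: poly_monom)

lemma cyclo_prod_divisors:
  assumes "n > 0"
  shows "(\<Prod>d\<in>{d. d dvd n}. cyclo d) = monom 1 n - (1 :: complex poly)"
proof -
  have fin: "finite {d. d dvd n}" using assms by simp
  have "(\<Prod>d\<in>{d. d dvd n}. cyclo d) = (\<Prod>z\<in>(\<Union>d\<in>{d. d dvd n}. Rt d). [:-z, 1:])"
    unfolding cyclo_Rt
    by (rule prod.UNION_disjoint[symmetric]) (use fin Rt_disjoint in auto)
  also have "\<dots> = monom 1 n - 1"
  proof (rule monic_dvd_eq)
    show "(\<Prod>z\<in>(\<Union>d\<in>{d. d dvd n}. Rt d). [:-z, 1:]) dvd monom 1 n - 1"
      by (rule lin_prod_dvd) (use fin Rt_root in \<open>auto simp: poly_monom\<close>)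
    show "lead_coeff (\<Prod>z\<in>(\<Union>d\<in>{d. d dvd n}. Rt d). [:-z, 1:]) = 1" by (rule monic_lin_prod)
    have dm: "degree (monom 1 n - 1 :: complex poly) = n"
      using assms degree_add_eq_left[of "-1" "monom 1 n :: complex poly"] by (simp add: degree_monom_eq)
    show "lead_coeff (monom 1 n - 1 :: complex poly) = 1"
      using assms by (simp add: dm coeff_monom)
    have "card (\<Union>d\<in>{d. d dvd n}. Rt d) = (\<Sum>d\<in>{d. d dvd n}. card (Rt d))"
      by (rule card_UN_disjoint) (use fin Rt_disjoint in auto)
    also have "\<dots> = n" by (simp add: card_Rt totient_divisor_sum)
    finally show "degree (\<Prod>z\<in>(\<Union>d\<in>{d. d dvd n}. Rt d). [:-z, 1:]) = degree (monom 1 n - 1 :: complex poly)"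
      using fin by (simp add: degree_lin_prod dm)
  qed
  finally show ?thesis .
qed


lemma Rpoly_xn1: "p > 0 \<Longrightarrow> monom 1 n - 1 \<in> Rpoly p"
  by (intro Rpoly_diff Rpoly_monom) auto

lemma cyclo_Rpoly: assumes p: "p > 0" shows "cyclo n \<in> Rpoly p"
proof (induction n rule: less_induct)
  case (less n)
  show ?case
  proof (cases "n = 0")
    case True
    thus ?thesis by (simp add: cyclo_def)
  next
    case False
    define D where "D = {d. d dvd n} - {n}"
    have fin: "finite {d. d dvd n}" using False by simp
    have "monom 1 n - 1 = (\<Prod>d\<in>{d. d dvd n}. cyclo d)" using False by (simp add: cyclo_prod_divisors)
    also have "\<dots> = cyclo n * (\<Prod>d\<in>D. cyclo d)"
      unfolding D_def using fin by (subst prod.remove[of _ n]) auto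
    finally have e: "monom 1 n - 1 = (\<Prod>d\<in>D. cyclo d) * cyclo n" by (simp add: mult.commute)
    have DR: "(\<Prod>d\<in>D. cyclo d) \<in> Rpoly p"
    proof (rule Rpoly_prod[OF p])
      fix d assume "d \<in> D"
      hence "d < n" using False unfolding D_def by (auto simp: le_less dest: dvd_imp_le)
      thus "cyclo d \<in> Rpoly p" by (rule less.IH)
    qed
    show ?thesis
      by (rule Rpoly_div_monic[OF p DR])
         (use e Rpoly_xn1[OF p, of n] in \<open>auto simp: lead_coeff_prod monic_cyclo\<close>)
  qed
qed

definition coprR :: "nat \<Rightarrow> complex poly \<Rightarrow> complex poly \<Rightarrow> bool" where
  "coprR p f g \<longleftrightarrow> (\<exists>s\<in>Rpoly p. \<exists>t\<in>Rpoly p. s * f + t * g = 1)"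

lemma Rpoly_dvd_quot:
  assumes p: "p > 0" and "F \<in> Rpoly p" "F = cyclo n * u" shows "u \<in> Rpoly p"
  by (rule Rpoly_div_monic[OF p cyclo_Rpoly[OF p] monic_cyclo]) (use assms in simp)

lemma cyclo_dvd_roots:
  assumes "\<And>z. z \<in> Rt n \<Longrightarrow> poly F z = 0" shows "cyclo n dvd F"
  unfolding cyclo_Rt by (rule lin_prod_dvd) (use assms in auto)

lemma cis_ne_1:
  assumes "\<not> (int p dvd k)" "p > 0" shows "cis (2 * pi * (of_int k / real p)) \<noteq> 1"
proof
  assume "cis (2 * pi * (of_int k / real p)) = 1"
  then obtain M :: int where "2 * pi * (of_int k / real p) = of_int M * 2 * pi" using cis_eq_1_int by blast
  hence "2 * pi * (of_int k - of_int M * real p) = 0" using assms(2) by (simp add: field_simps)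
  hence "of_int k = (of_int (M * int p) :: real)" by simp
  hence "k = M * int p" by linarith
  thus False using assms by simp
qed

lemma cyclo_coprime:
  assumes p: "prime p" and i: "i < j"
    and a: "coprime a p" "a \<ge> 1" and b: "coprime b p" "b \<ge> 1"
  shows "coprR p (cyclo (p ^ i * a)) (cyclo (p ^ j * b))"
proof -
  have p0: "p > 0" using p prime_gt_0_nat by blast
  define N where "N = p ^ (j - 1) * (a * b)"
  define y where "y = (monom 1 N :: complex poly)"
  define Psi where "Psi = (\<Sum>l<p. y ^ l)"
  define Q where "Q = (\<Sum>l<p. \<Sum>k<l. y ^ k)"
  have yR: "y \<in> Rpoly p" unfolding y_def by (rule Rpoly_monom) simp
  have PsiR: "Psi \<in> Rpoly p" unfolding Psi_def using yR p0 by (intro Rpoly_sum Rpoly_power)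
  have QR: "Q \<in> Rpoly p" unfolding Q_def using yR p0 by (intro Rpoly_sum Rpoly_power)
  have y1R: "y - 1 \<in> Rpoly p" using yR p0 by (intro Rpoly_diff) auto
  have PQ: "Psi - of_nat p = (y - 1) * Q"
  proof -
    have "Psi - of_nat p = (\<Sum>l<p. y ^ l - 1)" unfolding Psi_def by (simp add: sum_subtractf)
    also have "\<dots> = (\<Sum>l<p. (y - 1) * (\<Sum>k<l. y ^ k))" by (simp add: power_diff_1_eq)
    also have "\<dots> = (y - 1) * Q" unfolding Q_def by (simp add: sum_distrib_left)
    finally show ?thesis .
  qed
  have "cyclo (p ^ i * a) dvd y - 1"
  proof (rule cyclo_dvd_roots)
    fix z assume z: "z \<in> Rt (p ^ i * a)"
    have "p ^ i dvd p ^ (j - 1)" using i by (simp add: le_imp_power_dvd)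
    hence "p ^ i * a dvd N" unfolding N_def by (simp add: mult_dvd_mono)
    hence "z ^ N = 1" using Rt_root z by blast
    thus "poly (y - 1) z = 0" by (simp add: y_def poly_monom)
  qed
  then obtain v where v: "y - 1 = cyclo (p ^ i * a) * v" by blast
  have vR: "v \<in> Rpoly p" using Rpoly_dvd_quot[OF p0 y1R v] .
  have "cyclo (p ^ j * b) dvd Psi"
  proof (rule cyclo_dvd_roots)
    fix z assume z: "z \<in> Rt (p ^ j * b)"
    then obtain k where k: "k < p ^ j * b" "coprime k (p ^ j * b)" "z = rt (p ^ j * b) k"
      unfolding Rt_def by auto
    have jpos: "j \<ge> 1" using i by simp
    have kp: "coprime k p" using k(2) jpos
      by (metis coprime_mult_right_iff coprime_power_right_iff not_one_le_zero)
    have "coprime (k * a) p" using kp a(1) by simp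
    hence "\<not> p dvd k * a" using p by (metis coprime_absorb_right not_prime_unit)
    hence nd: "\<not> int p dvd int (k * a)" by (metis int_dvd_int_iff)
    define w where "w = cis (2 * pi * (of_int (int (k * a)) / real p))"
    have "real k * real N / real (p ^ j * b) = real (k * a) / real p"
    proof -
      have "real (p ^ j) = real p * real (p ^ (j - 1))" using jpos
        by (metis Suc_diff_le diff_Suc_1 of_nat_mult power_Suc)
      thus ?thesis unfolding N_def using p0 b(2) by (simp add: field_simps)
    qed
    hence zN: "z ^ N = w" using k(3) rt_pow[of "p ^ j * b" k N] by (simp add: w_def)
    have w1: "w \<noteq> 1" unfolding w_def by (rule cis_ne_1[OF nd p0])
    have "w ^ p = cis (2 * pi * real (k * a))" unfolding w_def using p0 by (simp add: DeMoivre field_simps)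
    hence wp: "w ^ p = 1" by (simp add: cis_multiple_2pi)
    have "poly Psi z = (\<Sum>l<p. w ^ l)" by (simp add: Psi_def y_def poly_sum poly_monom zN flip: power_mult)
    also have "\<dots> = 0" using w1 wp by (simp add: sum_gp_strict)
    finally show "poly Psi z = 0" .
  qed
  then obtain u where u: "Psi = cyclo (p ^ j * b) * u" by blast
  have uR: "u \<in> Rpoly p" using Rpoly_dvd_quot[OF p0 PsiR u] .
  have key: "of_nat p = u * cyclo (p ^ j * b) - (v * Q) * cyclo (p ^ i * a)"
    using PQ u v by (simp add: algebra_simps)
  define c where "c = 1 / (of_nat p :: complex)"
  have cZ: "c \<in> Zinvp p" unfolding c_def using Zinvp_inv[OF p0] .
  have "smult c (of_nat p) = (1 :: complex poly)" using p0 by (simp add: c_def of_nat_poly)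
  hence "(- smult c (v * Q)) * cyclo (p ^ i * a) + smult c u * cyclo (p ^ j * b) = 1"
    using key by (simp add: algebra_simps smult_diff_right)
  moreover have "- smult c (v * Q) \<in> Rpoly p"
    using p0 cZ vR QR by (metis Rpoly_0 Rpoly_diff Rpoly_mult Rpoly_smult diff_0)
  moreover have "smult c u \<in> Rpoly p" using p0 cZ uR by (rule Rpoly_smult)
  ultimately show ?thesis unfolding coprR_def by blast
qed


lemma dvdR_refl: "dvdR p f f" unfolding dvdR_def by (rule bexI[of _ 1]) auto

lemma dvdR_trans: "p > 0 \<Longrightarrow> dvdR p f g \<Longrightarrow> dvdR p g k \<Longrightarrow> dvdR p f k"
  unfolding dvdR_def by (metis Rpoly_mult mult.assoc)

lemma dvdR_add: "p > 0 \<Longrightarrow> dvdR p f a \<Longrightarrow> dvdR p f b \<Longrightarrow> dvdR p f (a + b)"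
  unfolding dvdR_def by (metis Rpoly_add distrib_left)

lemma dvdR_diff: "p > 0 \<Longrightarrow> dvdR p f a \<Longrightarrow> dvdR p f b \<Longrightarrow> dvdR p f (a - b)"
  unfolding dvdR_def by (metis Rpoly_diff right_diff_distrib)

lemma dvdR_one: "x \<in> Rpoly p \<Longrightarrow> dvdR p 1 x" unfolding dvdR_def by auto

lemma cycloMult_Rpoly: assumes "f \<in> cycloMult S" "p > 0" shows "f \<in> Rpoly p"
  using assms by (induction rule: cycloMult.induct) (auto intro: Rpoly_mult cyclo_Rpoly)

lemma cycloMult_mono: assumes "f \<in> cycloMult S" "S \<subseteq> T" shows "f \<in> cycloMult T"
  using assms by (induction rule: cycloMult.induct) (auto intro: cycloMult.intros)

lemma coprR_sym: "coprR p f g \<Longrightarrow> coprR p g f"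
  unfolding coprR_def by (metis add.commute)

lemma coprR_one: "coprR p f 1"
  unfolding coprR_def by (rule bexI[of _ 0], rule bexI[of _ 1]) auto

lemma coprR_mult:
  assumes p: "p > 0" and fR: "f \<in> Rpoly p" and "coprR p f g1" "coprR p f g2" shows "coprR p f (g1 * g2)"
proof -
  obtain s1 t1 s2 t2 where R: "s1 \<in> Rpoly p" "t1 \<in> Rpoly p" "s2 \<in> Rpoly p" "t2 \<in> Rpoly p"
    and e1: "t1 * g1 = 1 - s1 * f" and e2: "t2 * g2 = 1 - s2 * f"
    using assms unfolding coprR_def by (metis add_diff_cancel_left')
  have "(t1 * t2) * (g1 * g2) = (t1 * g1) * (t2 * g2)" by (simp add: algebra_simps)
  also have "\<dots> = 1 - (s1 + s2 - s1 * s2 * f) * f" unfolding e1 e2 by (simp add: algebra_simps)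
  finally have "(s1 + s2 - s1 * s2 * f) * f + (t1 * t2) * (g1 * g2) = 1" by simp
  moreover have "s1 + s2 - s1 * s2 * f \<in> Rpoly p" "t1 * t2 \<in> Rpoly p"
    using R fR p by (auto intro!: Rpoly_add Rpoly_diff Rpoly_mult)
  ultimately show ?thesis unfolding coprR_def by blast
qed

lemma coprR_prod:
  assumes p: "p > 0" and fR: "f \<in> Rpoly p" and "\<And>i. i \<in> I \<Longrightarrow> coprR p f (g i)"
  shows "coprR p f (prod g I)"
  using assms(3) by (induction I rule: infinite_finite_induct) (auto intro: coprR_one coprR_mult[OF p fR])

lemma coprR_cycloMult:
  assumes p: "p > 0" and c: "\<And>n m. n \<in> A \<Longrightarrow> m \<in> B \<Longrightarrow> coprR p (cyclo n) (cyclo m)"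
    and F: "F \<in> cycloMult A" and G: "G \<in> cycloMult B"
  shows "coprR p F G"
proof -
  have "\<And>n. n \<in> A \<Longrightarrow> coprR p (cyclo n) G"
    using G
  proof (induction rule: cycloMult.induct)
    case one show ?case by (rule coprR_one)
  next
    case (step m f) thus ?case using c by (auto intro!: coprR_mult[OF p] cyclo_Rpoly[OF p])
  qed
  hence H: "\<And>n. n \<in> A \<Longrightarrow> coprR p G (cyclo n)" by (rule coprR_sym)
  have "coprR p G F" using F
  proof (induction rule: cycloMult.induct)
    case one show ?case by (rule coprR_one)
  next
    case (step m f) thus ?case using G H by (auto intro!: coprR_mult[OF p] cycloMult_Rpoly[OF _ p])
  qed
  thus ?thesis by (rule coprR_sym)
qed

lemma coprR_dvd:
  assumes p: "p > 0" and "coprR p f r" "a \<in> Rpoly p" "dvdR p f (r * a)"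
  shows "dvdR p f a"
proof -
  obtain s t h where R: "s \<in> Rpoly p" "t \<in> Rpoly p" "h \<in> Rpoly p"
    and e1: "s * f + t * r = 1" and e2: "r * a = f * h"
    using assms unfolding coprR_def dvdR_def by blast
  have "a = (s * f + t * r) * a" using e1 by simp
  also have "\<dots> = f * (s * a + t * h)" by (simp add: algebra_simps flip: e2)
  finally show ?thesis unfolding dvdR_def using R assms(3) p by (auto intro!: Rpoly_add Rpoly_mult)
qed

lemma coprR_prod_dvd:
  assumes p: "p > 0" and "coprR p F G" "dvdR p F y" "dvdR p G y"
  shows "dvdR p (F * G) y"
proof -
  obtain s t h1 h2 where R: "s \<in> Rpoly p" "t \<in> Rpoly p" "h1 \<in> Rpoly p" "h2 \<in> Rpoly p"
    and e1: "s * F + t * G = 1" and e2: "y = F * h1" and e3: "y = G * h2"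
    using assms unfolding coprR_def dvdR_def by blast
  have "y = (s * F + t * G) * y" using e1 by simp
  also have "\<dots> = s * F * y + t * G * y" by (simp add: algebra_simps)
  also have "\<dots> = (F * G) * (s * h2 + t * h1)"
    by (subst (1) e3, subst e2) (simp add: algebra_simps)
  finally show ?thesis unfolding dvdR_def using R p by (auto intro!: Rpoly_add Rpoly_mult)
qed


lemma pjNp_sub: "prime (p::nat) \<Longrightarrow> pjNp p j \<subseteq> {n. n \<ge> 1}"
  unfolding pjNp_def by (auto simp: prime_gt_0_nat Suc_le_eq)

lemma pjNp_coprR:
  assumes p: "prime p" and ij: "i \<noteq> j" and n: "n \<in> pjNp p i" and m: "m \<in> pjNp p j"
  shows "coprR p (cyclo n) (cyclo m)"
proof -
  obtain a b where a: "n = p ^ i * a" "a \<ge> 1" "coprime a p" and b: "m = p ^ j * b" "b \<ge> 1" "coprime b p"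
    using n m unfolding pjNp_def by blast
  show ?thesis
  proof (cases "i < j")
    case True thus ?thesis using cyclo_coprime[OF p True a(3,2) b(3,2)] a b by simp
  next
    case False
    hence "j < i" using ij by simp
    thus ?thesis using cyclo_coprime[OF p _ b(3,2) a(3,2)] a b by (simp add: coprR_sym)
  qed
qed

lemma in_some_pjNp:
  assumes p: "prime p" shows "n \<ge> 1 \<Longrightarrow> \<exists>e. n \<in> pjNp p e"
proof (induction n rule: less_induct)
  case (less n)
  show ?case
  proof (cases "p dvd n")
    case True
    then obtain m where m: "n = p * m" by blast
    have p1: "p > 1" using p prime_gt_1_nat by blast
    have "m \<ge> 1" using less.prems m by (cases m) auto
    moreover have "m < n" using m p1 \<open>m \<ge> 1\<close> by simp
    ultimately obtain e where "m \<in> pjNp p e" using less.IH by blast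
    then obtain c where "m = p ^ e * c" "c \<ge> 1" "coprime c p" unfolding pjNp_def by blast
    hence "n = p ^ Suc e * c" using m by simp
    thus ?thesis using \<open>c \<ge> 1\<close> \<open>coprime c p\<close> unfolding pjNp_def by blast
  next
    case False
    hence "coprime n p" using p by (metis prime_imp_coprime coprime_commute)
    hence "n = p ^ 0 * n \<and> n \<ge> 1 \<and> coprime n p" using less.prems by simp
    thus ?thesis unfolding pjNp_def by blast
  qed
qed

lemma decomp:
  assumes p: "prime p" and F: "F \<in> cycloMult {n. n \<ge> 1}"
  shows "\<exists>J Fs. (\<forall>j. Fs j \<in> cycloMult (pjNp p j)) \<and> (\<forall>j\<ge>J. Fs j = 1) \<and> F = (\<Prod>j<J. Fs j)"
  using F
proof (induction rule: cycloMult.induct)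
  case one
  show ?case by (rule exI[of _ 0], rule exI[of _ "\<lambda>_. 1"]) (auto intro: cycloMult.one)
next
  case (step n f)
  then obtain J Fs where H: "\<forall>j. Fs j \<in> cycloMult (pjNp p j)" "\<forall>j\<ge>J. Fs j = 1" "f = (\<Prod>j<J. Fs j)"
    by blast
  obtain e where e: "n \<in> pjNp p e" using in_some_pjNp[OF p] step.hyps by auto
  define Fs' where "Fs' j = (if j = e then cyclo n else 1) * Fs j" for j
  define J' where "J' = max J (Suc e)"
  have "\<forall>j. Fs' j \<in> cycloMult (pjNp p j)"
    unfolding Fs'_def using H(1) e by (auto intro: cycloMult.step)
  moreover have "\<forall>j\<ge>J'. Fs' j = 1" unfolding Fs'_def J'_def using H(2) by auto
  moreover have "cyclo n * f = (\<Prod>j<J'. Fs' j)"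
  proof -
    have "(\<Prod>j<J'. Fs' j) = (\<Prod>j<J'. (if j = e then cyclo n else 1)) * (\<Prod>j<J'. Fs j)"
      unfolding Fs'_def by (rule prod.distrib)
    also have "(\<Prod>j<J'. (if j = e then cyclo n else 1)) = cyclo n"
      unfolding J'_def by (subst prod.delta) auto
    also have "(\<Prod>j<J'. Fs j) = (\<Prod>j<J. Fs j)"
      unfolding J'_def by (rule prod.mono_neutral_right) (use H(2) in auto)
    finally show ?thesis using H(3) by simp
  qed
  ultimately show ?case by blast
qed

lemma prod_split:
  fixes Fs :: "nat \<Rightarrow> complex poly"
  assumes that: "\<forall>j\<ge>J. Fs j = (1::complex poly)"
  shows "(\<Prod>j<J. Fs j) = Fs k * (\<Prod>i\<in>{..<J} - {k}. Fs i)"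
proof (cases "k < J")
  case True thus ?thesis using prod.remove[of "{..<J}" k Fs] by simp
next
  case False thus ?thesis using that by simp
qed

lemma crt:
  fixes Fs :: "nat \<Rightarrow> complex poly"
  assumes p: "p > 0"
    and cop: "\<And>i j. i \<noteq> j \<Longrightarrow> coprR p (Fs i) (Fs j)"
    and FR: "\<And>i. Fs i \<in> Rpoly p" and cR: "\<And>i. c i \<in> Rpoly p"
  shows "\<exists>x\<in>Rpoly p. \<forall>j<J. dvdR p (Fs j) (x - c j)"
proof (induction J)
  case 0 show ?case by (rule bexI[of _ 0]) auto
next
  case (Suc J)
  then obtain x0 where x0: "x0 \<in> Rpoly p" "\<forall>j<J. dvdR p (Fs j) (x0 - c j)" by blast
  define P where "P = (\<Prod>i<J. Fs i)"
  have "coprR p (Fs J) P" unfolding P_def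
    by (rule coprR_prod[OF p FR]) (auto intro: cop)
  then obtain s t where st: "s \<in> Rpoly p" "t \<in> Rpoly p" "t * Fs J + s * P = 1"
    unfolding coprR_def by (metis add.commute)
  define x where "x = x0 * t * Fs J + c J * s * P"
  have PR: "P \<in> Rpoly p" unfolding P_def using FR p by (intro Rpoly_prod)
  have xR: "x \<in> Rpoly p" unfolding x_def using x0 st PR FR cR p
    by (intro Rpoly_add Rpoly_mult) auto
  have "\<forall>j<Suc J. dvdR p (Fs j) (x - c j)"
  proof (intro allI impI)
    fix j assume "j < Suc J"
    show "dvdR p (Fs j) (x - c j)"
    proof (cases "j = J")
      case True
      have "x - c J - Fs J * (t * (x0 - c J)) = c J * (t * Fs J + s * P - 1)"
        unfolding x_def by (simp add: algebra_simps)
      hence "x - c j = Fs J * (t * (x0 - c J))" using st(3) True by simp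
      moreover have "t * (x0 - c J) \<in> Rpoly p" using st x0 cR p by (intro Rpoly_mult Rpoly_diff) auto
      ultimately show ?thesis unfolding dvdR_def using True by blast
    next
      case False
      hence jJ: "j < J" using \<open>j < Suc J\<close> by simp
      have "x - c j - ((x0 - c j) + P * (s * (c J - x0))) = x0 * (t * Fs J + s * P - 1)"
        unfolding x_def by (simp add: algebra_simps)
      hence "x - c j - ((x0 - c j) + P * (s * (c J - x0))) = 0" using st(3) by simp
      hence eq: "x - c j = (x0 - c j) + P * (s * (c J - x0))" by (metis right_minus_eq)
      have "P = Fs j * (\<Prod>i\<in>{..<J} - {j}. Fs i)" unfolding P_def using jJ
        by (subst prod.remove[of _ j]) auto
      moreover have "(\<Prod>i\<in>{..<J} - {j}. Fs i) * (s * (c J - x0)) \<in> Rpoly p"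
        using FR st cR x0 p by (intro Rpoly_mult Rpoly_prod Rpoly_diff) auto
      ultimately have "dvdR p (Fs j) (P * (s * (c J - x0)))" unfolding dvdR_def
        by (metis mult.assoc)
      thus ?thesis unfolding eq using x0(2) jJ p by (intro dvdR_add) auto
    qed
  qed
  thus ?case using xR by blast
qed

lemma prod_dvd:
  fixes Fs :: "nat \<Rightarrow> complex poly"
  assumes p: "p > 0"
    and cop: "\<And>i j. i \<noteq> j \<Longrightarrow> coprR p (Fs i) (Fs j)"
    and FR: "\<And>i. Fs i \<in> Rpoly p" and y: "y \<in> Rpoly p"
  shows "(\<forall>j<J. dvdR p (Fs j) y) \<Longrightarrow> dvdR p (\<Prod>j<J. Fs j) y"
proof (induction J)
  case 0 thus ?case using y by (simp add: dvdR_one)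
next
  case (Suc J)
  have "coprR p (\<Prod>j<J. Fs j) (Fs J)"
    by (rule coprR_sym, rule coprR_prod[OF p FR]) (auto intro: cop)
  moreover have "dvdR p (\<Prod>j<J. Fs j) y" using Suc by auto
  moreover have "dvdR p (Fs J) y" using Suc.prems by auto
  ultimately have "dvdR p ((\<Prod>j<J. Fs j) * Fs J) y" using coprR_prod_dvd[OF p] by blast
  thus ?case by (simp only: prod.lessThan_Suc)
qed


theorem proposition8:
  fixes p :: nat
  assumes "prime p"
  shows "(\<forall>g h. compat p {n. n \<ge> 1} g \<longrightarrow> compat p {n. n \<ge> 1} h \<longrightarrow>
            (\<forall>j. eqlim p (pjNp p j) g h) \<longrightarrow> eqlim p {n. n \<ge> 1} g h)
       \<and> (\<forall>G :: nat \<Rightarrow> complex poly \<Rightarrow> complex poly.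
            (\<forall>j. compat p (pjNp p j) (G j)) \<longrightarrow>
            (\<exists>g. compat p {n. n \<ge> 1} g \<and> (\<forall>j. eqlim p (pjNp p j) g (G j))))"
proof -
  have p0: "p > 0" using assms prime_gt_0_nat by blast
  have sub: "\<And>j. pjNp p j \<subseteq> {n. n \<ge> 1}" using pjNp_sub[OF assms] .
  have copM: "coprR p f f'" if "f \<in> cycloMult (pjNp p i)" "f' \<in> cycloMult (pjNp p j)" "i \<noteq> j" for f f' i j
    by (rule coprR_cycloMult[OF p0 _ that(1,2)]) (use pjNp_coprR[OF assms that(3)] in auto)
  have inN: "f \<in> cycloMult {n. n \<ge> 1}" if "f \<in> cycloMult (pjNp p j)" for f j
    using cycloMult_mono[OF that sub] .
  have MR: "f \<in> Rpoly p" if "f \<in> cycloMult S" for f S using cycloMult_Rpoly[OF that p0] .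
  have dvdF: "dvdR p (Fs j) F"
    if H: "\<forall>j. Fs j \<in> cycloMult (pjNp p j)" "\<forall>j\<ge>J. Fs j = 1" "F = (\<Prod>j<J. Fs j)" for Fs J F j
  proof -
    have "F = Fs j * (\<Prod>i\<in>{..<J} - {j}. Fs i)" using prod_split[OF H(2)] H(3) by simp
    moreover have "(\<Prod>i\<in>{..<J} - {j}. Fs i) \<in> Rpoly p" using H(1) MR p0 by (intro Rpoly_prod) auto
    ultimately show ?thesis unfolding dvdR_def by blast
  qed
  have dvdpart: "dvdR p f (Fs j)"
    if H: "\<forall>j. Fs j \<in> cycloMult (pjNp p j)" "\<forall>j\<ge>J. Fs j = 1" "F = (\<Prod>j<J. Fs j)"
      and f: "f \<in> cycloMult (pjNp p j)" "dvdR p f F" for Fs J F j f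
  proof -
    define r where "r = (\<Prod>i\<in>{..<J} - {j}. Fs i)"
    have "F = r * Fs j" using prod_split[OF H(2)] H(3) by (simp add: r_def mult.commute)
    moreover have "coprR p f r" unfolding r_def
      by (rule coprR_prod[OF p0 MR[OF f(1)]]) (metis H(1) f(1) copM Diff_iff singletonI)
    ultimately show ?thesis using coprR_dvd[OF p0] f(2) MR H(1) by metis
  qed
  have copFs: "coprR p (Fs i) (Fs j)" if "\<forall>j. Fs j \<in> cycloMult (pjNp p j)" "i \<noteq> j" for Fs i j
    using copM that by blast
  have part1: "eqlim p {n. n \<ge> 1} g h"
    if g: "compat p {n. n \<ge> 1} g" and h: "compat p {n. n \<ge> 1} h" and e: "\<forall>j. eqlim p (pjNp p j) g h"
    for g h
    unfolding eqlim_def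
  proof
    fix F assume F: "F \<in> cycloMult {n. n \<ge> 1}"
    obtain J Fs where H: "\<forall>j. Fs j \<in> cycloMult (pjNp p j)" "\<forall>j\<ge>J. Fs j = 1" "F = (\<Prod>j<J. Fs j)"
      using decomp[OF assms F] by blast
    have "\<forall>j<J. dvdR p (Fs j) (g F - h F)"
    proof (intro allI impI)
      fix j
      have FjN: "Fs j \<in> cycloMult {n. n \<ge> 1}" using inN H(1) by blast
      have d: "dvdR p (Fs j) F" using dvdF[OF H] .
      have 1: "dvdR p (Fs j) (g F - g (Fs j))" using g FjN F d unfolding compat_def by blast
      have 2: "dvdR p (Fs j) (h F - h (Fs j))" using h FjN F d unfolding compat_def by blast
      have 3: "dvdR p (Fs j) (g (Fs j) - h (Fs j))" using e H(1) unfolding eqlim_def by blast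
      have "g F - h F = ((g F - g (Fs j)) - (h F - h (Fs j))) + (g (Fs j) - h (Fs j))" by simp
      thus "dvdR p (Fs j) (g F - h F)" using 1 2 3 p0 by (metis dvdR_add dvdR_diff)
    qed
    moreover have "g F - h F \<in> Rpoly p" using g h F p0 unfolding compat_def by (blast intro: Rpoly_diff)
    ultimately have "dvdR p (\<Prod>j<J. Fs j) (g F - h F)"
      using prod_dvd[OF p0, of Fs] copFs[OF H(1)] MR H(1) by blast
    thus "dvdR p F (g F - h F)" using H(3) by simp
  qed
  have part2: "\<exists>g. compat p {n. n \<ge> 1} g \<and> (\<forall>j. eqlim p (pjNp p j) g (G j))"
    if G: "\<forall>j. compat p (pjNp p j) (G j)" for G :: "nat \<Rightarrow> complex poly \<Rightarrow> complex poly"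
  proof -
    define Good where "Good F x \<longleftrightarrow> x \<in> Rpoly p \<and>
      (\<forall>j. \<forall>f\<in>cycloMult (pjNp p j). dvdR p f F \<longrightarrow> dvdR p f (x - G j f))" for F x
    define g where "g F = (SOME x. Good F x)" for F
    have ex: "\<exists>x. Good F x" if F: "F \<in> cycloMult {n. n \<ge> 1}" for F
    proof -
      obtain J Fs where H: "\<forall>j. Fs j \<in> cycloMult (pjNp p j)" "\<forall>j\<ge>J. Fs j = 1" "F = (\<Prod>j<J. Fs j)"
        using decomp[OF assms F] by blast
      have cR: "G j (Fs j) \<in> Rpoly p" for j using G H(1) unfolding compat_def by blast
      obtain x where x: "x \<in> Rpoly p" "\<forall>j<J. dvdR p (Fs j) (x - G j (Fs j))"
        using crt[OF p0, of Fs "\<lambda>j. G j (Fs j)" J] copFs[OF H(1)] MR cR H(1) by blast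
      have "Good F x" unfolding Good_def
      proof (intro conjI allI ballI impI)
        show "x \<in> Rpoly p" by fact
        fix j f assume f: "f \<in> cycloMult (pjNp p j)" "dvdR p f F"
        have 1: "dvdR p f (Fs j)" using dvdpart[OF H f] .
        have 2: "dvdR p (Fs j) (x - G j (Fs j))"
        proof (cases "j < J")
          case True thus ?thesis using x by blast
        next
          case False
          thus ?thesis using H(2) x(1) cR[of j] p0 by (auto intro!: dvdR_one Rpoly_diff)
        qed
        have 3: "dvdR p f (G j (Fs j) - G j f)" using G f(1) H(1) 1 unfolding compat_def by blast
        have "x - G j f = (x - G j (Fs j)) + (G j (Fs j) - G j f)" by simp
        thus "dvdR p f (x - G j f)" using dvdR_trans[OF p0 1 2] 3 p0 by (metis dvdR_add)
      qed
      thus ?thesis by blast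
    qed
    have gG: "Good F (g F)" if "F \<in> cycloMult {n. n \<ge> 1}" for F
      unfolding g_def using ex[OF that] by (rule someI_ex)
    have "compat p {n. n \<ge> 1} g"
      unfolding compat_def
    proof (intro conjI ballI impI)
      fix F assume "F \<in> cycloMult {n. n \<ge> 1}"
      thus "g F \<in> Rpoly p" using gG unfolding Good_def by blast
    next
      fix F F' assume F: "F \<in> cycloMult {n. n \<ge> 1}" and F': "F' \<in> cycloMult {n. n \<ge> 1}"
        and d: "dvdR p F F'"
      obtain J Fs where H: "\<forall>j. Fs j \<in> cycloMult (pjNp p j)" "\<forall>j\<ge>J. Fs j = 1" "F = (\<Prod>j<J. Fs j)"
        using decomp[OF assms F] by blast
      have "\<forall>j<J. dvdR p (Fs j) (g F' - g F)"
      proof (intro allI impI)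
        fix j
        have dF: "dvdR p (Fs j) F" using dvdF[OF H] .
        have dF': "dvdR p (Fs j) F'" using dvdR_trans[OF p0 dF d] .
        have 1: "dvdR p (Fs j) (g F' - G j (Fs j))" using gG[OF F'] H(1) dF' unfolding Good_def by blast
        have 2: "dvdR p (Fs j) (g F - G j (Fs j))" using gG[OF F] H(1) dF unfolding Good_def by blast
        have "g F' - g F = (g F' - G j (Fs j)) - (g F - G j (Fs j))" by simp
        thus "dvdR p (Fs j) (g F' - g F)" using 1 2 p0 by (metis dvdR_diff)
      qed
      moreover have "g F' - g F \<in> Rpoly p" using gG[OF F] gG[OF F'] p0 unfolding Good_def
        by (blast intro: Rpoly_diff)
      ultimately have "dvdR p (\<Prod>j<J. Fs j) (g F' - g F)"
        using prod_dvd[OF p0, of Fs] copFs[OF H(1)] MR H(1) by blast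
      thus "dvdR p F (g F' - g F)" using H(3) by simp
    qed
    moreover have "\<forall>j. eqlim p (pjNp p j) g (G j)"
      unfolding eqlim_def
    proof (intro allI ballI)
      fix j f assume f: "f \<in> cycloMult (pjNp p j)"
      show "dvdR p f (g f - G j f)" using gG[OF inN[OF f]] f dvdR_refl unfolding Good_def by blast
    qed
    ultimately show ?thesis by blast
  qed
  show ?thesis using part1 part2 by blast
qed

end
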